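(* Let ${\bf A}=(a(i,j))_{1\le i,j\le n}$ be a real $n\times n$ matrix with no zero row, and suppose $$\min\Big(\min_{1\le i\le n}\#\{j:\ a(i,j)\ne 0\},\ \min_{1\le i\le n}\#\{j:\ a(j,i)\ne 0\}\Big)>n/2.$$ Then the matrix ${\bf A}_{\rm sde}$ associated with ${\bf A}$ (defined below) has $1$ as a simple eigenvalue, and all of its other eigenvalues lie in the open unit disk $\{z\in\mathbb{C}:|z|<1\}$.
   Context: For a real number $t$, $t_+=\max(t,0)$. Define $w_i=\big(\sum_{j=1}^n |a(i,j)|\big)^{-1}$, $\tilde a(i,j)=w_i\,a(i,j)$, $\tilde{\bf A}_+=\big((\tilde a(i,j))_+\big)_{i,j}$, $\tilde{\bf A}_-=\big((-\tilde a(i,j))_+\big)_{i,j}$, and $${\bf A}_{\rm sde}=\begin{pmatrix}\tilde{\bf A}_+ & \tilde{\bf A}_-\\ \tilde{\bf A}_+ & \tilde{\bf A}_-\end{pmatrix}\in\mathbb{R}^{2n\times 2n}.$$ *)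

theory Defs
  imports "Jordan_Normal_Form.Char_Poly"
begin

definition sde_w :: "real mat \<Rightarrow> nat \<Rightarrow> real" where
  "sde_w A i = inverse (\<Sum>j<dim_col A. \<bar>A $$ (i,j)\<bar>)"

definition sde_tilde :: "real mat \<Rightarrow> real mat" where
  "sde_tilde A = mat (dim_row A) (dim_col A) (\<lambda>(i,j). sde_w A i * A $$ (i,j))"

definition sde_plus :: "real mat \<Rightarrow> real mat" where
  "sde_plus A = mat (dim_row A) (dim_col A) (\<lambda>(i,j). max (sde_tilde A $$ (i,j)) 0)"

definition sde_minus :: "real mat \<Rightarrow> real mat" where
  "sde_minus A = mat (dim_row A) (dim_col A) (\<lambda>(i,j). max (- (sde_tilde A $$ (i,j))) 0)"

definition A_sde :: "real mat \<Rightarrow> real mat" where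
  "A_sde A = four_block_mat (sde_plus A) (sde_minus A) (sde_plus A) (sde_minus A)"

definition alg_mult :: "complex mat \<Rightarrow> complex \<Rightarrow> nat" where
  "alg_mult M z = order z (char_poly M)"

end

theory Submission
  imports Defs "Jordan_Normal_Form.Jordan_Normal_Form_Uniqueness" "Jordan_Normal_Form.Jordan_Normal_Form_Existence"
begin

lemma stoch_shift_zero:
  fixes s :: "nat \<Rightarrow> nat \<Rightarrow> real" and x :: "nat \<Rightarrow> real"
  assumes N: "N > 0" and nn: "\<forall>i<N. \<forall>j<N. s i j \<ge> 0" and rs: "\<forall>i<N. (\<Sum>j<N. s i j) = 1"
    and eq: "\<forall>i<N. (\<Sum>j<N. s i j * x j) = x i + c"
  shows "c = 0"
proof -
  have fin: "finite (x ` {..<N})" "x ` {..<N} \<noteq> {}" using N by auto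
  obtain i1 where i1: "i1 < N" "x i1 = Max (x ` {..<N})" using Max_in[OF fin] by auto
  obtain i2 where i2: "i2 < N" "x i2 = Min (x ` {..<N})" using Min_in[OF fin] by auto
  have le1: "\<forall>j<N. x j \<le> x i1" using i1 fin by auto
  have ge2: "\<forall>j<N. x j \<ge> x i2" using i2 fin by auto
  have "(\<Sum>j<N. s i1 j * x j) \<le> (\<Sum>j<N. s i1 j * x i1)"
    by (rule sum_mono) (use le1 nn i1 in \<open>auto intro: mult_left_mono\<close>)
  also have "\<dots> = x i1" using rs i1 by (simp add: sum_distrib_right[symmetric])
  finally have "c \<le> 0" using eq i1 by auto
  have "(\<Sum>j<N. s i2 j * x j) \<ge> (\<Sum>j<N. s i2 j * x i2)"
    by (rule sum_mono) (use ge2 nn i2 in \<open>auto intro: mult_left_mono\<close>)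
  moreover have "(\<Sum>j<N. s i2 j * x i2) = x i2" using rs i2 by (simp add: sum_distrib_right[symmetric])
  ultimately have "c \<ge> 0" using eq i2 by auto
  with \<open>c \<le> 0\<close> show ?thesis by auto
qed

lemma pos_stoch_eig:
  fixes c :: "nat \<Rightarrow> nat \<Rightarrow> real" and u :: "nat \<Rightarrow> complex"
  assumes n: "n > 0" and pos: "\<forall>i<n. \<forall>j<n. c i j > 0" and rs: "\<forall>i<n. (\<Sum>j<n. c i j) = 1"
    and eq: "\<forall>i<n. (\<Sum>j<n. of_real (c i j) * u j) = \<mu> * u i"
    and mu: "cmod \<mu> \<ge> 1" and nz: "\<exists>i<n. u i \<noteq> 0"
  shows "\<mu> = 1 \<and> (\<forall>j<n. u j = u 0)"
proof -
  have fin: "finite ((\<lambda>j. cmod (u j)) ` {..<n})" "(\<lambda>j. cmod (u j)) ` {..<n} \<noteq> {}" using n by auto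
  obtain i0 where i0: "i0 < n" "cmod (u i0) = Max ((\<lambda>j. cmod (u j)) ` {..<n})" using Max_in[OF fin] by auto
  have le: "\<forall>j<n. cmod (u j) \<le> cmod (u i0)" using i0 fin by auto
  define m where "m = cmod (u i0)"
  have "m > 0"
  proof -
    obtain i where i: "i < n" "u i \<noteq> 0" using nz by auto
    hence "cmod (u i) > 0" by simp
    thus ?thesis using le i unfolding m_def by (meson less_le_trans)
  qed
  define d where "d = \<mu> * u i0"
  define a where "a j = Re (u j)" for j
  define b where "b j = Im (u j)" for j
  define p where "p = Re d"
  define q where "q = Im d"
  let ?c = "c i0"
  have e0: "(\<Sum>j<n. of_real (?c j) * u j) = d" using eq i0 d_def by auto
  have ep: "(\<Sum>j<n. ?c j * a j) = p"
    using arg_cong[OF e0, of Re] unfolding p_def a_def by (simp add: Re_sum)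
  have eqq: "(\<Sum>j<n. ?c j * b j) = q"
    using arg_cong[OF e0, of Im] unfolding q_def b_def by (simp add: Im_sum)
  have ab: "a j ^ 2 + b j ^ 2 = cmod (u j) ^ 2" for j
    unfolding a_def b_def by (simp add: cmod_power2)
  have s1: "(\<Sum>j<n. ?c j * (a j ^ 2 + b j ^ 2)) \<le> (\<Sum>j<n. ?c j * m^2)"
  proof (rule sum_mono)
    fix j assume j: "j \<in> {..<n}"
    have "cmod (u j) ^ 2 \<le> m ^ 2" using le j unfolding m_def by (simp add: power_mono)
    then show "?c j * (a j ^ 2 + b j ^ 2) \<le> ?c j * m^2"
    proof -
      have "?c j \<ge> 0" using pos i0 j by (simp add: less_imp_le)
      thus ?thesis using ab[of j] \<open>cmod (u j) ^ 2 \<le> m ^ 2\<close> by (simp add: mult_left_mono)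
    qed
  qed
  have s2: "(\<Sum>j<n. ?c j * m^2) = m^2" using rs i0 by (simp add: sum_distrib_right[symmetric])
  have pq: "p^2 + q^2 = cmod \<mu> ^ 2 * m^2"
  proof -
    have "p^2 + q^2 = cmod d ^ 2" unfolding p_def q_def by (simp add: cmod_power2)
    also have "cmod d = cmod \<mu> * m" unfolding d_def m_def by (simp add: norm_mult)
    finally show ?thesis by (simp add: power_mult_distrib)
  qed
  have "cmod \<mu> ^ 2 \<ge> 1" using mu by (simp add: one_le_power)
  hence pq2: "p^2 + q^2 \<ge> m^2" using pq \<open>m > 0\<close> by (simp add: mult_le_cancel_right1)
  have expand: "(\<Sum>j<n. ?c j * ((a j - p)^2 + (b j - q)^2))
     = (\<Sum>j<n. ?c j * (a j ^ 2 + b j ^ 2)) - 2 * p * (\<Sum>j<n. ?c j * a j) - 2 * q * (\<Sum>j<n. ?c j * b j)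
       + (p^2 + q^2) * (\<Sum>j<n. ?c j)"
  proof -
    have pw: "?c j * ((a j - p)^2 + (b j - q)^2) = ?c j * (a j ^ 2 + b j ^ 2) - 2 * p * (?c j * a j)
       - 2 * q * (?c j * b j) + (p^2 + q^2) * ?c j" for j
      by (simp add: power2_eq_square algebra_simps)
    show ?thesis
      by (simp only: pw sum.distrib sum_subtractf sum_distrib_left)
  qed
  have c1: "(\<Sum>j<n. ?c j) = 1" using rs i0 by blast
  have e2: "(\<Sum>j<n. ?c j * ((a j - p)^2 + (b j - q)^2)) = (\<Sum>j<n. ?c j * (a j ^ 2 + b j ^ 2)) - (p^2 + q^2)"
    unfolding expand ep eqq c1 by (simp add: power2_eq_square)
  have "(\<Sum>j<n. ?c j * ((a j - p)^2 + (b j - q)^2)) \<le> 0"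
    unfolding e2 using s1 s2 pq2 by linarith
  moreover have nn: "\<forall>j\<in>{..<n}. 0 \<le> ?c j * ((a j - p)^2 + (b j - q)^2)"
  proof
    fix j assume "j \<in> {..<n}"
    hence "?c j \<ge> 0" using pos i0 by (simp add: less_imp_le)
    thus "0 \<le> ?c j * ((a j - p)^2 + (b j - q)^2)" by simp
  qed
  ultimately have "(\<Sum>j<n. ?c j * ((a j - p)^2 + (b j - q)^2)) = 0"
    by (meson antisym sum_nonneg)
  hence z: "\<forall>j<n. ?c j * ((a j - p)^2 + (b j - q)^2) = 0"
    using sum_nonneg_eq_0_iff[of "{..<n}" "\<lambda>j. ?c j * ((a j - p)^2 + (b j - q)^2)"] nn by simp
  have ud: "u j = d" if j: "j < n" for j
  proof -
    have cp: "?c j > 0" using pos i0 j by auto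
    have "?c j * ((a j - p)^2 + (b j - q)^2) = 0" using z j by blast
    hence "(a j - p)^2 + (b j - q)^2 = 0" using cp by simp
    hence "a j = p" "b j = q" by (simp_all add: sum_power2_eq_zero_iff)
    thus ?thesis unfolding a_def b_def p_def q_def by (intro complex_eqI) simp_all
  qed
  have "u i0 \<noteq> 0" using \<open>m > 0\<close> m_def by auto
  have "u i0 = \<mu> * u i0" using ud[OF i0(1)] d_def by simp
  hence "\<mu> = 1" using \<open>u i0 \<noteq> 0\<close> by simp
  moreover have "\<forall>j<n. u j = u 0" using ud n by auto
  ultimately show ?thesis by blast
qed

lemma sum_split2: "(\<Sum>j<n+n. f j) = (\<Sum>j<n. f j) + (\<Sum>j<n. f (j+n))" for f :: "nat \<Rightarrow> 'a::comm_monoid_add"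
proof -
  have "(\<Sum>j<n+n. f j) = sum f {0..<n} + sum f {n..<n+n}"
    by (simp add: lessThan_atLeast0 sum.atLeastLessThan_concat)
  also have "sum f {n..<n+n} = sum (\<lambda>j. f (j+n)) {0..<n}"
    using sum.shift_bounds_nat_ivl[of f 0 n n] by simp
  finally show ?thesis by (simp add: lessThan_atLeast0)
qed

lemma block_eig:
  fixes p m b s :: "nat \<Rightarrow> nat \<Rightarrow> real" and v :: "nat \<Rightarrow> complex"
  assumes n: "n > 0"
    and pm: "\<forall>i<n. \<forall>j<n. p i j + m i j = b i j"
    and bnn: "\<forall>i<n. \<forall>j<n. b i j \<ge> 0"
    and brs: "\<forall>i<n. (\<Sum>j<n. b i j) = 1"
    and cpos: "\<forall>i<n. \<forall>j<n. (\<Sum>k<n. b i k * b k j) > 0"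
    and s: "\<forall>i<n+n. \<forall>j<n+n. s i j = (if j < n then p (if i < n then i else i - n) j
                                   else m (if i < n then i else i - n) (j - n))"
    and eq: "\<forall>i<n+n. (\<Sum>j<n+n. of_real (s i j) * v j) = z * v i"
    and z: "cmod z \<ge> 1" and nz: "\<exists>i<n+n. v i \<noteq> 0"
  shows "z = 1 \<and> (\<forall>i<n+n. v i = v 0)"
proof -
  define T where "T k = (\<Sum>j<n. of_real (p k j) * v j + of_real (m k j) * v (j+n))" for k
  have sT: "(\<Sum>j<n+n. of_real (s i j) * v j) = T (if i < n then i else i - n)" if i: "i < n+n" for i
  proof -
    have "(\<Sum>j<n+n. of_real (s i j) * v j) = (\<Sum>j<n. of_real (s i j) * v j) + (\<Sum>j<n. of_real (s i (j+n)) * v (j+n))"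
      by (rule sum_split2)
    also have "(\<Sum>j<n. of_real (s i j) * v j) = (\<Sum>j<n. of_real (p (if i < n then i else i - n) j) * v j)"
      by (rule sum.cong) (use s i in auto)
    also have "(\<Sum>j<n. of_real (s i (j+n)) * v (j+n)) = (\<Sum>j<n. of_real (m (if i < n then i else i - n) j) * v (j+n))"
      by (rule sum.cong) (use s i in auto)
    finally show ?thesis unfolding T_def by (simp add: sum.distrib)
  qed
  have z0: "z \<noteq> 0" using z by auto
  have vv: "v (i+n) = v i" if i: "i < n" for i
  proof -
    have "z * v i = T i" using eq sT[of i] i by auto
    moreover have "z * v (i+n) = T i" using eq sT[of "i+n"] i by auto
    ultimately have "z * v (i+n) = z * v i" by simp
    thus ?thesis using z0 by simp
  qed
  have Bu: "\<forall>k<n. (\<Sum>j<n. of_real (b k j) * v j) = z * v k"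
  proof (intro allI impI)
    fix k assume k: "k < n"
    have "T k = (\<Sum>j<n. of_real (b k j) * v j)" unfolding T_def
    proof (rule sum.cong)
      fix j assume j: "j \<in> {..<n}"
      hence "b k j = p k j + m k j" using pm k by auto
      thus "of_real (p k j) * v j + of_real (m k j) * v (j+n) = of_real (b k j) * v j"
        using vv[of j] j by (simp add: distrib_right)
    qed simp
    thus "(\<Sum>j<n. of_real (b k j) * v j) = z * v k" using eq sT[of k] k by auto
  qed
  have unz: "\<exists>i<n. v i \<noteq> 0"
  proof (rule ccontr)
    assume "\<not> ?thesis"
    hence "\<forall>i<n. v i = 0" by auto
    moreover have "\<forall>i<n+n. v i = 0"
    proof (intro allI impI)
      fix i assume "i < n+n"
      thus "v i = 0" using \<open>\<forall>i<n. v i = 0\<close> vv[of "i-n"] by (cases "i < n") auto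
    qed
    thus False using nz by auto
  qed
  define c where "c i j = (\<Sum>k<n. b i k * b k j)" for i j
  have crs: "\<forall>i<n. (\<Sum>j<n. c i j) = 1"
  proof (intro allI impI)
    fix i assume i: "i < n"
    have "(\<Sum>j<n. c i j) = (\<Sum>k<n. b i k * (\<Sum>j<n. b k j))"
      unfolding c_def by (simp add: sum_distrib_left) (rule sum.swap)
    also have "\<dots> = (\<Sum>k<n. b i k)" by (rule sum.cong) (use brs in auto)
    finally show "(\<Sum>j<n. c i j) = 1" using brs i by simp
  qed
  have Cu: "\<forall>i<n. (\<Sum>j<n. of_real (c i j) * v j) = z^2 * v i"
  proof (intro allI impI)
    fix i assume i: "i < n"
    have "(\<Sum>j<n. of_real (c i j) * v j) = (\<Sum>k<n. of_real (b i k) * (\<Sum>j<n. of_real (b k j) * v j))"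
      unfolding c_def by (simp add: sum_distrib_left sum_distrib_right mult.assoc) (rule sum.swap)
    also have "\<dots> = (\<Sum>k<n. of_real (b i k) * (z * v k))" by (rule sum.cong) (use Bu in auto)
    also have "\<dots> = z * (\<Sum>k<n. of_real (b i k) * v k)" by (simp add: sum_distrib_left algebra_simps)
    also have "\<dots> = z^2 * v i" using Bu i by (simp add: power2_eq_square)
    finally show "(\<Sum>j<n. of_real (c i j) * v j) = z^2 * v i" .
  qed
  have zz: "cmod (z^2) \<ge> 1" using z by (simp add: norm_power one_le_power)
  have cp: "\<forall>i<n. \<forall>j<n. c i j > 0" using cpos unfolding c_def by blast
  have r0: "z^2 = 1 \<and> (\<forall>j<n. v j = v 0)" by (rule pos_stoch_eig[OF n cp crs Cu zz unz])
  hence r1: "z^2 = 1" and r: "\<And>j. j < n \<Longrightarrow> v j = v 0" by blast+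
  have "v 0 \<noteq> 0"
  proof
    assume "v 0 = 0"
    then have "\<forall>j<n. v j = 0" using r by metis
    thus False using unz by blast
  qed
  have "(\<Sum>j<n. of_real (b 0 j) * v j) = (\<Sum>j<n. of_real (b 0 j) * v 0)"
  proof (rule sum.cong)
    fix j assume "j \<in> {..<n}"
    hence "v j = v 0" using r by blast
    thus "of_real (b 0 j) * v j = of_real (b 0 j) * v 0" by (rule arg_cong)
  qed simp
  also have "\<dots> = of_real (\<Sum>j<n. b 0 j) * v 0" by (simp add: sum_distrib_right)
  also have "\<dots> = v 0" using brs n by simp
  finally have "z * v 0 = v 0" using Bu n by auto
  hence z1: "z = 1" using \<open>v 0 \<noteq> 0\<close> by simp
  have "\<forall>i<n+n. v i = v 0"
  proof (intro allI impI)
    fix i assume i: "i < n+n"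
    show "v i = v 0"
    proof (cases "i < n")
      case True thus ?thesis using r by blast
    next
      case False
      hence "i - n < n" "i = (i - n) + n" using i by auto
      hence "v i = v (i - n)" using vv by metis
      also have "\<dots> = v 0" using r \<open>i - n < n\<close> by blast
      finally show ?thesis .
    qed
  qed
  with z1 show ?thesis by blast
qed

lemma kernel_dim_le1:
  fixes K :: "'a::field mat"
  assumes K: "K \<in> carrier_mat N N" and o: "u \<in> mat_kernel K"
    and all: "\<And>x. x \<in> mat_kernel K \<Longrightarrow> \<exists>c. x = c \<cdot>\<^sub>v u"
  shows "kernel_dim K \<le> 1"
proof -
  interpret Kr: kernel N N K by (unfold_locales) (rule K)
  have gen: "Kr.Ker.span {u} = mat_kernel K"
  proof
    show "Kr.Ker.span {u} \<subseteq> mat_kernel K"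
    proof
      fix x assume "x \<in> Kr.Ker.span {u}"
      thus "x \<in> mat_kernel K" using o Kr.Ker.span_closed[of "{u}" x] by blast
    qed
    show "mat_kernel K \<subseteq> Kr.Ker.span {u}"
    proof
      fix x assume x: "x \<in> mat_kernel K"
      obtain c where c: "x = c \<cdot>\<^sub>v u" using all[OF x] by blast
      have u1: "u \<in> Kr.Ker.span {u}" using o Kr.Ker.span_self[of u] by blast
      have sub: "submodule class_ring (Kr.Ker.span {u}) Kr.VK"
        using o Kr.Ker.span_is_submodule[of "{u}"] by blast
      have "c \<cdot>\<^sub>v u \<in> Kr.Ker.span {u}"
        using submodule.smult_closed[OF sub, of c u] u1 by simp
      thus "x \<in> Kr.Ker.span {u}" using c by simp
    qed
  qed
  have "Kr.Ker.dim \<le> 1" using Kr.Ker.dim_le1I[of u] gen o by blast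
  thus ?thesis using Kr.kernel_dim by simp
qed

lemma list_min2: "\<forall>x\<in>set xs. (x::nat) \<ge> 1 \<Longrightarrow> sum_list (map (\<lambda>n. min 2 n) xs) \<le> 1 \<Longrightarrow> sum_list xs \<le> 1"
proof (cases xs)
  case (Cons x ys)
  assume a: "\<forall>x\<in>set xs. (x::nat) \<ge> 1" "sum_list (map (\<lambda>n. min 2 n) xs) \<le> 1"
  show ?thesis
  proof (cases ys)
    case Nil thus ?thesis using a Cons by auto
  next
    case (Cons y zs)
    with a \<open>xs = x # ys\<close> have "min 2 x + min 2 y \<le> (1::nat)" by auto
    moreover have "x \<ge> 1" "y \<ge> 1" using a \<open>xs = x # ys\<close> Cons by auto
    ultimately show ?thesis by auto
  qed
qed simp

theorem proposition3:
  fixes A :: "real mat" and n :: nat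
  assumes "A \<in> carrier_mat n n"
    and "n > 0"
    and "\<forall>i<n. \<exists>j<n. A $$ (i,j) \<noteq> 0"
    and "\<forall>i<n. real (card {j. j < n \<and> A $$ (i,j) \<noteq> 0}) > real n / 2"
    and "\<forall>i<n. real (card {j. j < n \<and> A $$ (j,i) \<noteq> 0}) > real n / 2"
  shows "eigenvalue (map_mat complex_of_real (A_sde A)) 1
      \<and> alg_mult (map_mat complex_of_real (A_sde A)) 1 = 1
      \<and> (\<forall>z. eigenvalue (map_mat complex_of_real (A_sde A)) z \<and> z \<noteq> 1 \<longrightarrow> cmod z < 1)"
proof -
  have A: "A \<in> carrier_mat n n" and n: "n > 0" using assms by auto
  have dA: "dim_row A = n" "dim_col A = n" using A by auto
  define w where "w i = sde_w A i" for i
  have sumpos: "(\<Sum>j<n. \<bar>A $$ (i,j)\<bar>) > 0" if i: "i < n" for i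
  proof -
    obtain j where j: "j < n" "A $$ (i,j) \<noteq> 0" using assms(3) i by blast
    show ?thesis by (rule sum_pos2[of "{..<n}" j]) (use j in auto)
  qed
  have wdef: "w i = inverse (\<Sum>j<n. \<bar>A $$ (i,j)\<bar>)" for i
    unfolding w_def sde_w_def dA ..
  have wpos: "w i > 0" if i: "i < n" for i
    using sumpos[OF i] wdef by simp
  define b where "b i j = w i * \<bar>A $$ (i,j)\<bar>" for i j
  have brs: "\<forall>i<n. (\<Sum>j<n. b i j) = 1"
  proof (intro allI impI)
    fix i assume i: "i < n"
    have "(\<Sum>j<n. b i j) = w i * (\<Sum>j<n. \<bar>A $$ (i,j)\<bar>)" unfolding b_def by (simp add: sum_distrib_left)
    thus "(\<Sum>j<n. b i j) = 1" using sumpos[OF i] wdef by simp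
  qed
  have bnn: "\<forall>i<n. \<forall>j<n. b i j \<ge> 0"
  proof (intro allI impI)
    fix i j assume "i < n" "j < n"
    hence "w i \<ge> 0" using wpos by (simp add: less_imp_le)
    thus "b i j \<ge> 0" unfolding b_def by simp
  qed
  have bpos: "b i j > 0" if "i < n" "A $$ (i,j) \<noteq> 0" for i j
    unfolding b_def using wpos that by simp
  have cpos: "\<forall>i<n. \<forall>j<n. (\<Sum>k<n. b i k * b k j) > 0"
  proof (intro allI impI)
    fix i j assume i: "i < n" and j: "j < n"
    define R where "R = {k. k < n \<and> A $$ (i,k) \<noteq> 0}"
    define K where "K = {k. k < n \<and> A $$ (k,j) \<noteq> 0}"
    have fR: "finite R" "finite K" unfolding R_def K_def by auto
    have "real (card R) > real n / 2" using assms(4) i unfolding R_def by blast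
    moreover have "real (card K) > real n / 2" using assms(5) j unfolding K_def by blast
    ultimately have "card R + card K > n" by linarith
    moreover have "card (R \<union> K) \<le> n"
    proof -
      have "R \<union> K \<subseteq> {..<n}" unfolding R_def K_def by auto
      from card_mono[OF _ this] show ?thesis by simp
    qed
    moreover have "card R + card K = card (R \<union> K) + card (R \<inter> K)" using card_Un_Int fR by blast
    ultimately have "card (R \<inter> K) > 0" by linarith
    then obtain k where k: "k \<in> R" "k \<in> K" by (metis card_0_eq disjoint_iff finite_Int fR(1) less_irrefl)
    have kn: "k < n" and "A $$ (i,k) \<noteq> 0" "A $$ (k,j) \<noteq> 0" using k unfolding R_def K_def by auto
    hence "b i k * b k j > 0" using bpos i kn by simp
    thus "(\<Sum>k<n. b i k * b k j) > 0"
      by (intro sum_pos2[of "{..<n}" k]) (use kn bnn i j in \<open>auto intro: mult_nonneg_nonneg\<close>)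
  qed
  define p where "p i j = sde_plus A $$ (i,j)" for i j
  define m where "m i j = sde_minus A $$ (i,j)" for i j
  have pij: "p i j = max (w i * A $$ (i,j)) 0" if "i < n" "j < n" for i j
    using that unfolding p_def sde_plus_def sde_tilde_def w_def dA by simp
  have mij: "m i j = max (- (w i * A $$ (i,j))) 0" if "i < n" "j < n" for i j
    using that unfolding m_def sde_minus_def sde_tilde_def w_def dA by simp
  have pm: "\<forall>i<n. \<forall>j<n. p i j + m i j = b i j"
  proof (intro allI impI)
    fix i j assume i: "i < n" and j: "j < n"
    have "p i j + m i j = \<bar>w i * A $$ (i,j)\<bar>" using pij[OF i j] mij[OF i j] by simp
    also have "\<dots> = b i j" unfolding b_def using wpos[OF i] by (simp add: abs_mult)
    finally show "p i j + m i j = b i j" .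
  qed
  have pnn: "p i j \<ge> 0" "m i j \<ge> 0" if "i < n" "j < n" for i j
    using pij[OF that] mij[OF that] by auto
  have Pc: "sde_plus A \<in> carrier_mat n n" "sde_minus A \<in> carrier_mat n n"
    unfolding sde_plus_def sde_minus_def dA by auto
  define s where "s i j = A_sde A $$ (i,j)" for i j
  have sdef: "\<forall>i<n+n. \<forall>j<n+n. s i j = (if j < n then p (if i < n then i else i - n) j
                                   else m (if i < n then i else i - n) (j - n))"
    using Pc unfolding s_def A_sde_def p_def m_def by auto
  have snn: "\<forall>i<n+n. \<forall>j<n+n. s i j \<ge> 0"
  proof (intro allI impI)
    fix i j assume i: "i < n+n" and j: "j < n+n"
    have ii: "(if i < n then i else i - n) < n" using i by auto
    show "s i j \<ge> 0" using sdef i j pnn[OF ii, of j] pnn[OF ii, of "j-n"] by auto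
  qed
  have srs: "\<forall>i<n+n. (\<Sum>j<n+n. s i j) = 1"
  proof (intro allI impI)
    fix i assume i: "i < n+n"
    define i' where "i' = (if i < n then i else i - n)"
    have ii: "i' < n" using i unfolding i'_def by auto
    have "(\<Sum>j<n+n. s i j) = (\<Sum>j<n. s i j) + (\<Sum>j<n. s i (j+n))" by (rule sum_split2)
    also have "\<dots> = (\<Sum>j<n. p i' j) + (\<Sum>j<n. m i' j)"
      using sdef i unfolding i'_def by (intro arg_cong2[where f="(+)"] sum.cong) auto
    also have "\<dots> = (\<Sum>j<n. b i' j)" using pm ii by (simp add: sum.distrib[symmetric])
    finally show "(\<Sum>j<n+n. s i j) = 1" using brs ii by simp
  qed
  define S where "S = map_mat complex_of_real (A_sde A)"
  have S: "S \<in> carrier_mat (n+n) (n+n)" unfolding S_def A_sde_def using Pc by auto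
  have Sij: "S $$ (i,j) = of_real (s i j)" if "i < n+n" "j < n+n" for i j
    using that S unfolding S_def s_def by auto
  have Smv: "(S *\<^sub>v v) $ i = (\<Sum>j<n+n. of_real (s i j) * v $ j)"
    if v: "v \<in> carrier_vec (n+n)" and i: "i < n+n" for v i
  proof -
    have "(S *\<^sub>v v) $ i = row S i \<bullet> v" using S i by simp
    also have "\<dots> = (\<Sum>j\<in>{0..<n+n}. row S i $ j * v $ j)" using v unfolding scalar_prod_def by simp
    also have "\<dots> = (\<Sum>j<n+n. of_real (s i j) * v $ j)"
      unfolding lessThan_atLeast0 by (rule sum.cong) (use S i Sij in auto)
    finally show ?thesis .
  qed
  have E: "z = 1 \<and> (\<forall>i<n+n. v $ i = v $ 0)"
    if v: "v \<in> carrier_vec (n+n)" and ev: "S *\<^sub>v v = z \<cdot>\<^sub>v v" and nz: "v \<noteq> 0\<^sub>v (n+n)"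
      and z: "cmod z \<ge> 1" for v z
  proof -
    have eq: "\<forall>i<n+n. (\<Sum>j<n+n. of_real (s i j) * v $ j) = z * v $ i"
    proof (intro allI impI)
      fix i assume i: "i < n+n"
      have "(S *\<^sub>v v) $ i = z * v $ i" using ev v i by simp
      thus "(\<Sum>j<n+n. of_real (s i j) * v $ j) = z * v $ i" using Smv[OF v i] by simp
    qed
    have nz': "\<exists>i<n+n. v $ i \<noteq> 0"
    proof (rule ccontr)
      assume "\<not> ?thesis"
      hence "v = 0\<^sub>v (n+n)" using v by (intro eq_vecI) auto
      thus False using nz by simp
    qed
    show ?thesis using block_eig[OF n pm bnn brs cpos sdef eq z nz'] by blast
  qed
  define one where "one = vec (n+n) (\<lambda>_. 1::complex)"
  have one: "one \<in> carrier_vec (n+n)" unfolding one_def by simp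
  have one0: "one \<noteq> 0\<^sub>v (n+n)"
  proof
    assume "one = 0\<^sub>v (n+n)"
    hence "one $ 0 = 0" using n by simp
    thus False unfolding one_def using n by simp
  qed
  have Sone: "S *\<^sub>v one = one"
  proof (rule eq_vecI)
    fix i assume "i < dim_vec one"
    hence i: "i < n+n" using one by simp
    have "(S *\<^sub>v one) $ i = (\<Sum>j<n+n. of_real (s i j) * one $ j)" by (rule Smv[OF one i])
    also have "\<dots> = (\<Sum>j<n+n. of_real (s i j))" unfolding one_def by (rule sum.cong) auto
    also have "\<dots> = of_real (\<Sum>j<n+n. s i j)" by simp
    also have "\<dots> = 1" using srs i by simp
    finally show "(S *\<^sub>v one) $ i = one $ i" unfolding one_def using i by simp
  qed (use S one in simp)
  have dS: "dim_row S = n+n" using S by simp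
  have ev1: "eigenvalue S 1"
    unfolding eigenvalue_def eigenvector_def dS using one one0 Sone by (intro exI[of _ one]) simp
  have part3: "\<forall>z. eigenvalue S z \<and> z \<noteq> 1 \<longrightarrow> cmod z < 1"
  proof (intro allI impI)
    fix z assume a: "eigenvalue S z \<and> z \<noteq> 1"
    then obtain v where v: "v \<in> carrier_vec (n+n)" "v \<noteq> 0\<^sub>v (n+n)" "S *\<^sub>v v = z \<cdot>\<^sub>v v"
      unfolding eigenvalue_def eigenvector_def dS by blast
    show "cmod z < 1"
    proof (rule ccontr)
      assume "\<not> cmod z < 1"
      hence "cmod z \<ge> 1" by simp
      from E[OF v(1) v(3) v(2) this] a show False by blast
    qed
  qed
  define CM where "CM = char_matrix S 1"
  have CM: "CM \<in> carrier_mat (n+n) (n+n)" unfolding CM_def using S by simp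
  have CMmv: "(CM *\<^sub>v v) $ i = (S *\<^sub>v v) $ i - v $ i" if v: "v \<in> carrier_vec (n+n)" and i: "i < n+n" for v i
  proof -
    have "S *\<^sub>v v + (-1) \<cdot>\<^sub>v v = CM *\<^sub>v v" unfolding CM_def char_matrix_def
      by (rule eq_vecI, insert v S, auto simp: add_scalar_prod_distrib[of _ "n+n"])
    moreover have "(S *\<^sub>v v + (-1) \<cdot>\<^sub>v v) $ i = (S *\<^sub>v v) $ i - v $ i" using v i S by simp
    ultimately show ?thesis by simp
  qed
  define K where "K = CM ^\<^sub>m 2"
  have K: "K \<in> carrier_mat (n+n) (n+n)" unfolding K_def using CM by simp
  have Kmv: "K *\<^sub>v v = CM *\<^sub>v (CM *\<^sub>v v)" if v: "v \<in> carrier_vec (n+n)" for v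
  proof -
    have "K = CM * CM" unfolding K_def using CM by (simp add: numeral_2_eq_2)
    thus ?thesis using CM v by simp
  qed
  have kerx: "x = (x $ 0) \<cdot>\<^sub>v one" if x: "x \<in> mat_kernel K" for x
  proof -
    have xc: "x \<in> carrier_vec (n+n)" and Kx: "K *\<^sub>v x = 0\<^sub>v (n+n)" using mat_kernelD[OF K x] by auto
    define y where "y = CM *\<^sub>v x"
    have yc: "y \<in> carrier_vec (n+n)" unfolding y_def using CM xc by simp
    have CMy: "CM *\<^sub>v y = 0\<^sub>v (n+n)" using Kx Kmv[OF xc] unfolding y_def by simp
    have Sy: "S *\<^sub>v y = 1 \<cdot>\<^sub>v y"
    proof (rule eq_vecI)
      fix i assume "i < dim_vec (1 \<cdot>\<^sub>v y)"
      hence i: "i < n+n" using yc by simp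
      have "(CM *\<^sub>v y) $ i = 0" using CMy i by simp
      thus "(S *\<^sub>v y) $ i = (1 \<cdot>\<^sub>v y) $ i" using CMmv[OF yc i] i yc by simp
    qed (use S yc in simp)
    have yconst: "\<forall>i<n+n. y $ i = y $ 0"
    proof (cases "y = 0\<^sub>v (n+n)")
      case True thus ?thesis using n by simp
    next
      case False
      have "cmod (1::complex) \<ge> 1" by simp
      from E[OF yc Sy False this] show ?thesis by blast
    qed
    define g where "g = y $ 0"
    have xeq: "(\<Sum>j<n+n. of_real (s i j) * x $ j) = x $ i + g" if i: "i < n+n" for i
    proof -
      have "y $ i = g" using yconst i unfolding g_def by blast
      hence "(CM *\<^sub>v x) $ i = g" unfolding y_def .
      thus ?thesis using CMmv[OF xc i] Smv[OF xc i] by (simp add: algebra_simps)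
    qed
    have "Re g = 0"
    proof (rule stoch_shift_zero[of "n+n" s "\<lambda>j. Re (x $ j)"])
      show "\<forall>i<n+n. (\<Sum>j<n+n. s i j * Re (x $ j)) = Re (x $ i) + Re g"
      proof (intro allI impI)
        fix i assume i: "i < n+n"
        from arg_cong[OF xeq[OF i], of Re] show "(\<Sum>j<n+n. s i j * Re (x $ j)) = Re (x $ i) + Re g"
          by (simp add: Re_sum)
      qed
    qed (use n snn srs in auto)
    moreover have "Im g = 0"
    proof (rule stoch_shift_zero[of "n+n" s "\<lambda>j. Im (x $ j)"])
      show "\<forall>i<n+n. (\<Sum>j<n+n. s i j * Im (x $ j)) = Im (x $ i) + Im g"
      proof (intro allI impI)
        fix i assume i: "i < n+n"
        from arg_cong[OF xeq[OF i], of Im] show "(\<Sum>j<n+n. s i j * Im (x $ j)) = Im (x $ i) + Im g"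
          by (simp add: Im_sum)
      qed
    qed (use n snn srs in auto)
    ultimately have g0: "g = 0" by (simp add: complex_eq_iff)
    have Sx: "S *\<^sub>v x = 1 \<cdot>\<^sub>v x"
    proof (rule eq_vecI)
      fix i assume "i < dim_vec (1 \<cdot>\<^sub>v x)"
      hence i: "i < n+n" using xc by simp
      show "(S *\<^sub>v x) $ i = (1 \<cdot>\<^sub>v x) $ i" using xeq[OF i] Smv[OF xc i] g0 i xc by simp
    qed (use S xc in simp)
    have xconst: "\<forall>i<n+n. x $ i = x $ 0"
    proof (cases "x = 0\<^sub>v (n+n)")
      case True thus ?thesis using n by simp
    next
      case False
      have "cmod (1::complex) \<ge> 1" by simp
      from E[OF xc Sx False this] show ?thesis by blast
    qed
    show ?thesis
    proof (rule eq_vecI)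
      fix i assume "i < dim_vec ((x $ 0) \<cdot>\<^sub>v one)"
      hence i: "i < n+n" using one by simp
      have "x $ i = x $ 0" using xconst i by blast
      thus "x $ i = ((x $ 0) \<cdot>\<^sub>v one) $ i" using i unfolding one_def by simp
    qed (use xc one in simp)
  qed
  have oneK: "one \<in> mat_kernel K"
  proof (rule mat_kernelI[OF K one])
    have "CM *\<^sub>v one = 0\<^sub>v (n+n)"
    proof (rule eq_vecI)
      fix i assume "i < dim_vec (0\<^sub>v (n+n) :: complex vec)"
      hence i: "i < n+n" by simp
      show "(CM *\<^sub>v one) $ i = 0\<^sub>v (n+n) $ i" using CMmv[OF one i] Sone i by simp
    qed (use CM in simp)
    moreover have "CM *\<^sub>v 0\<^sub>v (n+n) = 0\<^sub>v (n+n)"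
      using CM by (intro eq_vecI) (auto simp: scalar_prod_def)
    ultimately show "K *\<^sub>v one = 0\<^sub>v (n+n)" using Kmv[OF one] by simp
  qed
  have "kernel_dim K \<le> 1"
    by (rule kernel_dim_le1[OF K oneK]) (use kerx in blast)
  hence dg1: "dim_gen_eigenspace S 1 2 \<le> 1"
    unfolding dim_gen_eigenspace_def K_def CM_def .
  obtain as where "char_poly S = (\<Prod>a\<leftarrow>as. [:- a, 1:])" using char_poly_factorized[OF S] by blast
  from jordan_nf_exists[OF S this] obtain n_as where jnf: "jordan_nf S n_as" by blast
  define L where "L = map fst (filter (\<lambda>na. snd na = (1::complex)) n_as)"
  have ordL: "Polynomial.order 1 (char_poly S) = sum_list L" unfolding L_def by (rule jordan_nf_order[OF jnf])
  have "filter (\<lambda>(n, e). e = (1::complex)) n_as = filter (\<lambda>na. snd na = 1) n_as"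
    by (rule filter_cong) auto
  hence dgL: "dim_gen_eigenspace S 1 2 = sum_list (map (\<lambda>n. min 2 n) L)"
    unfolding dim_gen_eigenspace[OF jnf] L_def by simp
  have Lge: "\<forall>x\<in>set L. x \<ge> 1"
    using jnf unfolding jordan_nf_def L_def by (force simp: image_iff)
  have le1: "Polynomial.order 1 (char_poly S) \<le> 1" using list_min2[OF Lge] dg1 dgL ordL by simp
  have "poly (char_poly S) 1 = 0" using ev1 eigenvalue_root_char_poly[OF S] by blast
  moreover have "char_poly S \<noteq> 0"
    using degree_monic_char_poly[OF S] by auto
  ultimately have "Polynomial.order 1 (char_poly S) \<noteq> 0" using order_root by blast
  with le1 have "Polynomial.order 1 (char_poly S) = 1" by simp
  hence "alg_mult S 1 = 1" unfolding alg_mult_def .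
  with ev1 part3 show ?thesis unfolding S_def by blast
qed

end
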